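(* Consider Generalized FTPL with a $(\kappa,\delta)$-admissible translation matrix $\Gamma\in[0,1]^{|\mathcal X|\times N}$, accuracy $\epsilon\ge0$, and a $\big(\rho,\frac{1+2\epsilon}{\delta}\big)$-dispersed distribution $D$. Then \[ \mathbb{E}\Big[\sum_{t=1}^T f(x_{t+1},y_t)-f(x_t,y_t)\Big]\le 2TN\kappa\rho . \]
   Context: Online learning setting: $\mathcal X$ finite set of learner actions, $\mathcal Y$ set of adversary actions, $f:\mathcal X\times\mathcal Y\to[0,1]$; adversary sequence $y_1,\dots,y_T$ fixed in advance. Generalized FTPL with parameters $(\Gamma,D,\epsilon)$: draw $\alpha_1,\dots,\alpha_N$ i.i.d. from $D$ once; for each $t=1,\dots,T+1$, $x_t$ is any action (a function of $\vec\alpha$ and $y_1,\dots,y_{t-1}$) with $\sum_{\tau<t}f(x_t,y_\tau)+\vec\alpha\cdot\Gamma_{x_t}\ge\sum_{\tau<t}f(x,y_\tau)+\vec\alpha\cdot\Gamma_x-\epsilon$ for all $x\in\mathcal X$; here $\Gamma_x$ is the row of $\Gamma$ indexed by $x$. A matrix $\Gamma$ is admissible if its rows are pairwise distinct; it is $(\kappa,\delta)$-admissible if it is admissible, each column contains at most $\kappa$ distinct values, and any two distinct values in the same column differ by at least $\delta$. A distribution $D$ on $\mathbb R$ is $(\rho,L)$-dispersed if every interval of length $L$ has $D$-probability at most $\rho$. *)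

theory Defs
  imports "HOL-Probability.Probability"
begin

definition admissible :: "nat \<Rightarrow> ('x \<Rightarrow> nat \<Rightarrow> real) \<Rightarrow> bool" where
  "admissible N \<Gamma> \<longleftrightarrow> (\<forall>x x'. x \<noteq> x' \<longrightarrow> (\<exists>j<N. \<Gamma> x j \<noteq> \<Gamma> x' j))"

definition kd_admissible ::
  "nat \<Rightarrow> nat \<Rightarrow> real \<Rightarrow> ('x \<Rightarrow> nat \<Rightarrow> real) \<Rightarrow> bool" where
  "kd_admissible N \<kappa> \<delta> \<Gamma> \<longleftrightarrow>
     admissible N \<Gamma>
     \<and> (\<forall>j<N. card ((\<lambda>x. \<Gamma> x j) ` UNIV) \<le> \<kappa>)
     \<and> (\<forall>j<N. \<forall>x x'. \<Gamma> x j \<noteq> \<Gamma> x' j \<longrightarrow> \<bar>\<Gamma> x j - \<Gamma> x' j\<bar> \<ge> \<delta>)"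

text \<open>A distribution on the reals is (rho,L)-dispersed if every interval of length L
  has probability at most rho (closed intervals contain all others of the same length).\<close>

definition dispersed :: "real measure \<Rightarrow> real \<Rightarrow> real \<Rightarrow> bool" where
  "dispersed D \<rho> L \<longleftrightarrow> (\<forall>a. measure D {a..a + L} \<le> \<rho>)"

definition ftpl_choice ::
  "('x \<Rightarrow> 'y \<Rightarrow> real) \<Rightarrow> (nat \<Rightarrow> 'y) \<Rightarrow> nat \<Rightarrow> ('x \<Rightarrow> nat \<Rightarrow> real) \<Rightarrow> real
   \<Rightarrow> (nat \<Rightarrow> real) \<Rightarrow> nat \<Rightarrow> 'x \<Rightarrow> bool" where
  "ftpl_choice f y N \<Gamma> \<epsilon> \<alpha> t xt \<longleftrightarrow>
     (\<forall>x. (\<Sum>\<tau>\<in>{1..<t}. f xt (y \<tau>)) + (\<Sum>j<N. \<alpha> j * \<Gamma> xt j)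
          \<ge> (\<Sum>\<tau>\<in>{1..<t}. f x (y \<tau>)) + (\<Sum>j<N. \<alpha> j * \<Gamma> x j) - \<epsilon>)"

end

theory Submission
  imports Defs
begin

lemma sec_bound:
  fixes D :: "real measure" and A :: "(nat \<Rightarrow> real) set"
  assumes D: "prob_space D" and j: "j < N"
    and A: "A \<in> sets (PiM {..<N} (\<lambda>_. D))"
    and sec: "\<And>\<beta>. \<beta> \<in> space (PiM ({..<N}-{j}) (\<lambda>_. D)) \<Longrightarrow>
                  emeasure D {a\<in>space D. \<beta>(j:=a) \<in> A} \<le> ennreal \<rho>"
  shows "emeasure (PiM {..<N} (\<lambda>_. D)) A \<le> ennreal \<rho>"
proof -
  interpret pp: product_prob_space "\<lambda>_. D" UNIV
    by (simp add: product_prob_space_def product_prob_space_axioms_def D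
       product_sigma_finite_def prob_space_imp_sigma_finite)
  define I where "I = {..<N} - {j}"
  have NI: "{..<N} = insert j I" using j by (auto simp: I_def)
  have fI: "finite I" "j \<notin> I" by (auto simp: I_def)
  have "emeasure (PiM {..<N} (\<lambda>_. D)) A = (\<integral>\<^sup>+ \<alpha>. indicator A \<alpha> \<partial>PiM {..<N} (\<lambda>_. D))"
    using A by simp
  also have "\<dots> = (\<integral>\<^sup>+ \<beta>. (\<integral>\<^sup>+ a. indicator A (\<beta>(j:=a)) \<partial>D) \<partial>PiM I (\<lambda>_. D))"
    unfolding NI using A NI by (subst pp.product_nn_integral_insert[OF fI]) auto
  also have "\<dots> \<le> (\<integral>\<^sup>+ \<beta>. ennreal \<rho> \<partial>PiM I (\<lambda>_. D))"
  proof (rule nn_integral_mono)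
    fix \<beta> assume b: "\<beta> \<in> space (PiM I (\<lambda>_. D))"
    have m: "(\<lambda>a. \<beta>(j:=a)) \<in> measurable D (PiM {..<N} (\<lambda>_. D))"
      unfolding NI using measurable_component_update[OF b fI(2)] by simp
    have S: "{a\<in>space D. \<beta>(j:=a) \<in> A} \<in> sets D"
      using measurable_sets[OF m A] by (simp add: vimage_def Int_def conj_commute)
    have "(\<integral>\<^sup>+ a. indicator A (\<beta>(j:=a)) \<partial>D) = (\<integral>\<^sup>+ a. indicator {a\<in>space D. \<beta>(j:=a) \<in> A} a \<partial>D)"
      by (intro nn_integral_cong) (auto simp: indicator_def)
    also have "\<dots> = emeasure D {a\<in>space D. \<beta>(j:=a) \<in> A}" using S by simp
    also have "\<dots> \<le> ennreal \<rho>" using sec b by (simp add: I_def)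
    finally show "(\<integral>\<^sup>+ a. indicator A (\<beta>(j:=a)) \<partial>D) \<le> ennreal \<rho>" .
  qed
  also have "\<dots> = ennreal \<rho>"
    using prob_space.emeasure_space_1[OF prob_space_PiM[of I "\<lambda>_. D"]] D by simp
  finally show ?thesis .
qed

lemma diam_bound:
  fixes D :: "real measure" and S :: "real set"
  assumes D: "prob_space D" and Db: "sets D = sets borel" and disp: "dispersed D \<rho> L"
    and diam: "\<And>a b. a \<in> S \<Longrightarrow> b \<in> S \<Longrightarrow> a - b \<le> L"
  shows "emeasure D S \<le> ennreal \<rho>"
proof -
  interpret prob_space D by (rule D)
  have rho: "0 \<le> \<rho>" using disp unfolding dispersed_def
    by (meson measure_nonneg order_trans)
  show ?thesis
  proof (cases "S \<in> sets D \<and> S \<noteq> {}")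
    case False
    then show ?thesis by (auto simp: emeasure_notin_sets)
  next
    case True
    then obtain s0 where s0: "s0 \<in> S" by auto
    have bdd: "bdd_below S" unfolding bdd_below_def
      using diam[OF s0] by (metis diff_le_eq add.commute le_diff_eq)
    have sub: "S \<subseteq> {Inf S .. Inf S + L}"
    proof
      fix a assume a: "a \<in> S"
      have "Inf S \<le> a" using cInf_lower[OF a bdd] .
      moreover have "a - L \<le> Inf S"
        using True by (intro cInf_greatest) (auto dest: diam[OF a])
      ultimately show "a \<in> {Inf S .. Inf S + L}" by auto
    qed
    have "emeasure D S \<le> emeasure D {Inf S .. Inf S + L}"
      by (rule emeasure_mono[OF sub]) (simp add: Db)
    also have "\<dots> = ennreal (measure D {Inf S .. Inf S + L})"
      by (simp add: emeasure_eq_measure)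
    also have "\<dots> \<le> ennreal \<rho>" using disp unfolding dispersed_def
      by (simp add: ennreal_leI)
    finally show ?thesis .
  qed
qed

lemma core:
  fixes K g c :: "'x \<Rightarrow> real"
  assumes g: "\<And>z. 0 \<le> g z \<and> g z \<le> 1"
    and o2: "\<And>z''. K z'' + a2 * c z'' - \<epsilon> \<le> K z + a2 * c z"
    and o1: "\<And>z''. K z'' + g z'' + a1 * c z'' - \<epsilon> \<le> K z' + g z' + a1 * c z'"
  shows "(a1 - a2) * (c z - c z') \<le> 1 + 2 * \<epsilon>"
proof -
  have "K z' + a2 * c z' - \<epsilon> \<le> K z + a2 * c z" by (rule o2)
  moreover have "K z + g z + a1 * c z - \<epsilon> \<le> K z' + g z' + a1 * c z'" by (rule o1)
  moreover have "0 \<le> g z" "g z' \<le> 1" using g by auto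
  ultimately show ?thesis by (simp add: algebra_simps)
qed


theorem lemma2p2:
  fixes f :: "'x::finite \<Rightarrow> 'y \<Rightarrow> real"
    and y :: "nat \<Rightarrow> 'y"
    and T N \<kappa> :: nat
    and \<Gamma> :: "'x \<Rightarrow> nat \<Rightarrow> real"
    and \<delta> \<epsilon> \<rho> :: real
    and D :: "real measure"
    and x :: "nat \<Rightarrow> (nat \<Rightarrow> real) \<Rightarrow> 'x"
  assumes f_range: "\<And>a b. 0 \<le> f a b \<and> f a b \<le> 1"
    and \<Gamma>_range: "\<And>a j. j < N \<Longrightarrow> 0 \<le> \<Gamma> a j \<and> \<Gamma> a j \<le> 1"
    and \<Gamma>_adm: "kd_admissible N \<kappa> \<delta> \<Gamma>"
    and \<delta>_pos: "\<delta> > 0"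
    and \<epsilon>_nonneg: "\<epsilon> \<ge> 0"
    and D_prob: "prob_space D"
    and D_borel: "sets D = sets borel"
    and D_disp: "dispersed D \<rho> ((1 + 2 * \<epsilon>) / \<delta>)"
    and x_ftpl: "\<And>\<alpha> t. t \<in> {1..T + 1} \<Longrightarrow> ftpl_choice f y N \<Gamma> \<epsilon> \<alpha> t (x t \<alpha>)"
  shows "(\<integral>\<alpha>. (\<Sum>t = 1..T. f (x (t + 1) \<alpha>) (y t) - f (x t \<alpha>) (y t))
            \<partial>(PiM {..<N} (\<lambda>_. D)))
         \<le> 2 * real T * real N * real \<kappa> * \<rho>"
proof -
  define M where "M = PiM {..<N} (\<lambda>_. D)"
  define L where "L = (1 + 2 * \<epsilon>) / \<delta>"
  define \<Phi> where "\<Phi> t z \<alpha> = (\<Sum>\<tau>\<in>{1..<t}. f z (y \<tau>)) + (\<Sum>i<N. \<alpha> i * \<Gamma> z i)"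
    for t z and \<alpha> :: "nat \<Rightarrow> real"
  define opt where "opt t z \<alpha> \<longleftrightarrow> (\<forall>z''. \<Phi> t z'' \<alpha> - \<epsilon> \<le> \<Phi> t z \<alpha>)" for t z \<alpha>
  define P where "P t j v = {\<alpha> \<in> space M. (\<exists>z. \<Gamma> z j = v \<and> opt t z \<alpha>) \<and>
      (\<exists>z'. \<Gamma> z' j < v \<and> opt (Suc t) z' \<alpha>)}" for t j v
  define Q where "Q t j v = {\<alpha> \<in> space M. (\<exists>z. \<Gamma> z j = v \<and> opt t z \<alpha>) \<and>
      (\<exists>z'. \<Gamma> z' j > v \<and> opt (Suc t) z' \<alpha>)}" for t j v
  define V where "V j = (\<lambda>z. \<Gamma> z j) ` UNIV" for j
  define G where "G \<alpha> = (\<Sum>t\<in>{1..T}. \<Sum>j<N. \<Sum>v\<in>V j.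
      indicator (P t j v) \<alpha> + indicator (Q t j v) \<alpha> :: real)" for \<alpha>
  define F where "F \<alpha> = (\<Sum>t = 1..T. f (x (t + 1) \<alpha>) (y t) - f (x t \<alpha>) (y t))" for \<alpha>
  interpret M: prob_space M unfolding M_def by (intro prob_space_PiM D_prob)
  have rho: "0 \<le> \<rho>" using D_disp unfolding dispersed_def
    by (meson measure_nonneg order_trans)
  have adm: "admissible N \<Gamma>" and cardV: "\<And>j. j < N \<Longrightarrow> card (V j) \<le> \<kappa>"
    and sep: "\<And>j z z'. j < N \<Longrightarrow> \<Gamma> z j \<noteq> \<Gamma> z' j \<Longrightarrow> \<bar>\<Gamma> z j - \<Gamma> z' j\<bar> \<ge> \<delta>"
    using \<Gamma>_adm unfolding kd_admissible_def V_def by auto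
  have Lnn: "0 \<le> L" unfolding L_def using \<delta>_pos \<epsilon>_nonneg by simp
  have comp: "(\<lambda>\<alpha>. \<alpha> i) \<in> borel_measurable M" if "i < N" for i
  proof -
    have "(\<lambda>\<alpha>. \<alpha> i) \<in> measurable M D"
      unfolding M_def using that by (intro measurable_component_singleton) auto
    then show ?thesis using measurable_cong_sets[OF refl D_borel] by blast
  qed
  have Phi_meas[measurable]: "(\<lambda>\<alpha>. \<Phi> t z \<alpha>) \<in> borel_measurable M" for t z
    unfolding \<Phi>_def using comp by (intro borel_measurable_add borel_measurable_const
      borel_measurable_sum borel_measurable_times) auto
  have opt_meas: "Measurable.pred M (opt t z)" for t z
  proof -
    have "Measurable.pred M (\<lambda>\<alpha>. \<Phi> t z'' \<alpha> - \<epsilon> \<le> \<Phi> t z \<alpha>)" for z''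
      unfolding pred_def by (intro borel_measurable_le borel_measurable_diff Phi_meas borel_measurable_const)
    then show ?thesis unfolding opt_def by (intro pred_intros_countable)
  qed
  have P_sets: "P t j v \<in> sets M" for t j v
  proof -
    have "Measurable.pred M (\<lambda>\<alpha>. (\<exists>z. \<Gamma> z j = v \<and> opt t z \<alpha>) \<and> (\<exists>z'. \<Gamma> z' j < v \<and> opt (Suc t) z' \<alpha>))"
      by (intro pred_intros_logic(3) pred_intros_countable(2) pred_intros_conj1' opt_meas)
    then show ?thesis unfolding P_def by (rule predE)
  qed
  have Q_sets: "Q t j v \<in> sets M" for t j v
  proof -
    have "Measurable.pred M (\<lambda>\<alpha>. (\<exists>z. \<Gamma> z j = v \<and> opt t z \<alpha>) \<and> (\<exists>z'. \<Gamma> z' j > v \<and> opt (Suc t) z' \<alpha>))"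
      by (intro pred_intros_logic(3) pred_intros_countable(2) pred_intros_conj1' opt_meas)
    then show ?thesis unfolding Q_def by (rule predE)
  qed
  have Phi_upd: "\<Phi> t z (\<beta>(j:=a)) = \<Phi> t z (\<beta>(j:=0)) + a * \<Gamma> z j" if "j < N" for t z \<beta> j a
  proof -
    have "(\<Sum>i<N. (\<beta>(j:=a)) i * \<Gamma> z i) = (\<beta>(j:=a)) j * \<Gamma> z j + (\<Sum>i\<in>{..<N}-{j}. (\<beta>(j:=a)) i * \<Gamma> z i)"
      using that by (intro sum.remove) auto
    moreover have "(\<Sum>i<N. (\<beta>(j:=0)) i * \<Gamma> z i) = (\<beta>(j:=0)) j * \<Gamma> z j + (\<Sum>i\<in>{..<N}-{j}. (\<beta>(j:=0)) i * \<Gamma> z i)"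
      using that by (intro sum.remove) auto
    moreover have "(\<Sum>i\<in>{..<N}-{j}. (\<beta>(j:=a)) i * \<Gamma> z i) = (\<Sum>i\<in>{..<N}-{j}. (\<beta>(j:=0)) i * \<Gamma> z i)"
      by (intro sum.cong) auto
    ultimately show ?thesis unfolding \<Phi>_def by simp
  qed
  have Phi_Suc: "\<Phi> (Suc t) z \<alpha> = \<Phi> t z \<alpha> + f z (y t)" if "1 \<le> t" for t z \<alpha>
    unfolding \<Phi>_def using that by (simp add: sum.atLeastLessThan_Suc)
  have pair: "(a1 - a2) * (\<Gamma> z j - \<Gamma> z' j) \<le> 1 + 2 * \<epsilon>"
    if "1 \<le> t" "j < N" "opt t z (\<beta>(j:=a2))" "opt (Suc t) z' (\<beta>(j:=a1))" for t j z z' \<beta> a1 a2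
  proof (rule core[where K = "\<lambda>z. \<Phi> t z (\<beta>(j:=0))" and g = "\<lambda>z. f z (y t)"])
    show "0 \<le> f w (y t) \<and> f w (y t) \<le> 1" for w using f_range .
    show "\<Phi> t w (\<beta>(j:=0)) + a2 * \<Gamma> w j - \<epsilon> \<le> \<Phi> t z (\<beta>(j:=0)) + a2 * \<Gamma> z j" for w
    proof -
      have "\<Phi> t w (\<beta>(j:=a2)) - \<epsilon> \<le> \<Phi> t z (\<beta>(j:=a2))" using that(3) unfolding opt_def by blast
      then show ?thesis using Phi_upd[OF that(2), of t w \<beta> a2] Phi_upd[OF that(2), of t z \<beta> a2] by linarith
    qed
    show "\<Phi> t w (\<beta>(j:=0)) + f w (y t) + a1 * \<Gamma> w j - \<epsilon> \<le> \<Phi> t z' (\<beta>(j:=0)) + f z' (y t) + a1 * \<Gamma> z' j" for w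
    proof -
      have "\<Phi> (Suc t) w (\<beta>(j:=a1)) - \<epsilon> \<le> \<Phi> (Suc t) z' (\<beta>(j:=a1))" using that(4) unfolding opt_def by blast
      then show ?thesis using Phi_upd[OF that(2), of t w \<beta> a1] Phi_upd[OF that(2), of t z' \<beta> a1]
        Phi_Suc[OF that(1), of w "\<beta>(j:=a1)"] Phi_Suc[OF that(1), of z' "\<beta>(j:=a1)"] by linarith
    qed
  qed
  have P_bound: "measure M (P t j v) \<le> \<rho>" if "1 \<le> t" "j < N" for t j v
  proof -
    have "emeasure M (P t j v) \<le> ennreal \<rho>" unfolding M_def
    proof (rule sec_bound[OF D_prob that(2)])
      show "P t j v \<in> sets (PiM {..<N} (\<lambda>_. D))" using P_sets M_def by simp
      fix \<beta> show "emeasure D {a\<in>space D. \<beta>(j:=a) \<in> P t j v} \<le> ennreal \<rho>"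
      proof (rule diam_bound[OF D_prob D_borel D_disp])
        fix a b assume a: "a \<in> {a\<in>space D. \<beta>(j:=a) \<in> P t j v}" and b: "b \<in> {a\<in>space D. \<beta>(j:=a) \<in> P t j v}"
        obtain z where z: "\<Gamma> z j = v" "opt t z (\<beta>(j:=b))" using b unfolding P_def by auto
        obtain z' where z': "\<Gamma> z' j < v" "opt (Suc t) z' (\<beta>(j:=a))" using a unfolding P_def by auto
        have h: "(a - b) * (\<Gamma> z j - \<Gamma> z' j) \<le> 1 + 2 * \<epsilon>" by (rule pair[OF that z(2) z'(2)])
        have d: "\<Gamma> z j - \<Gamma> z' j \<ge> \<delta>" using sep[OF that(2), of z z'] z z' by auto
        show "a - b \<le> (1 + 2 * \<epsilon>) / \<delta>"
        proof (cases "a - b \<le> 0")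
          case True then show ?thesis using Lnn L_def by simp
        next
          case False
          then have "(a - b) * \<delta> \<le> (a - b) * (\<Gamma> z j - \<Gamma> z' j)" using d by (intro mult_left_mono) auto
          then have "(a - b) * \<delta> \<le> 1 + 2 * \<epsilon>" using h by simp
          then show ?thesis using \<delta>_pos by (simp add: pos_le_divide_eq)
        qed
      qed
    qed
    then show ?thesis using rho by (simp add: M.emeasure_eq_measure)
  qed
  have Q_bound: "measure M (Q t j v) \<le> \<rho>" if "1 \<le> t" "j < N" for t j v
  proof -
    have "emeasure M (Q t j v) \<le> ennreal \<rho>" unfolding M_def
    proof (rule sec_bound[OF D_prob that(2)])
      show "Q t j v \<in> sets (PiM {..<N} (\<lambda>_. D))" using Q_sets M_def by simp
      fix \<beta> show "emeasure D {a\<in>space D. \<beta>(j:=a) \<in> Q t j v} \<le> ennreal \<rho>"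
      proof (rule diam_bound[OF D_prob D_borel D_disp])
        fix a b assume a: "a \<in> {a\<in>space D. \<beta>(j:=a) \<in> Q t j v}" and b: "b \<in> {a\<in>space D. \<beta>(j:=a) \<in> Q t j v}"
        obtain z where z: "\<Gamma> z j = v" "opt t z (\<beta>(j:=a))" using a unfolding Q_def by auto
        obtain z' where z': "\<Gamma> z' j > v" "opt (Suc t) z' (\<beta>(j:=b))" using b unfolding Q_def by auto
        have h: "(b - a) * (\<Gamma> z j - \<Gamma> z' j) \<le> 1 + 2 * \<epsilon>" by (rule pair[OF that z(2) z'(2)])
        have d: "\<Gamma> z' j - \<Gamma> z j \<ge> \<delta>" using sep[OF that(2), of z z'] z z' by auto
        show "a - b \<le> (1 + 2 * \<epsilon>) / \<delta>"
        proof (cases "a - b \<le> 0")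
          case True then show ?thesis using Lnn L_def by simp
        next
          case False
          then have "(a - b) * \<delta> \<le> (a - b) * (\<Gamma> z' j - \<Gamma> z j)" using d by (intro mult_left_mono) auto
          also have "\<dots> = (b - a) * (\<Gamma> z j - \<Gamma> z' j)" by (simp add: algebra_simps)
          finally have "(a - b) * \<delta> \<le> 1 + 2 * \<epsilon>" using h by simp
          then show ?thesis using \<delta>_pos by (simp add: pos_le_divide_eq)
        qed
      qed
    qed
    then show ?thesis using rho by (simp add: M.emeasure_eq_measure)
  qed
  have pw: "F \<alpha> \<le> G \<alpha>" if \<alpha>: "\<alpha> \<in> space M" for \<alpha>
  proof -
    have step: "f (x (t + 1) \<alpha>) (y t) - f (x t \<alpha>) (y t) \<le>
        (\<Sum>j<N. \<Sum>v\<in>V j. indicator (P t j v) \<alpha> + indicator (Q t j v) \<alpha> :: real)"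
      if t: "t \<in> {1..T}" for t
    proof (cases "x (t + 1) \<alpha> = x t \<alpha>")
      case True
      then show ?thesis by (simp add: sum_nonneg)
    next
      case False
      obtain j where j: "j < N" "\<Gamma> (x (t+1) \<alpha>) j \<noteq> \<Gamma> (x t \<alpha>) j"
        using adm False unfolding admissible_def by blast
      have o1: "opt t (x t \<alpha>) \<alpha>" using x_ftpl[of t \<alpha>] t
        unfolding ftpl_choice_def opt_def \<Phi>_def by auto
      have o2: "opt (Suc t) (x (t+1) \<alpha>) \<alpha>" using x_ftpl[of "t+1" \<alpha>] t
        unfolding ftpl_choice_def opt_def \<Phi>_def by auto
      define v where "v = \<Gamma> (x t \<alpha>) j"
      have vV: "v \<in> V j" unfolding v_def V_def by auto
      have one: "(1::real) \<le> indicator (P t j v) \<alpha> + indicator (Q t j v) \<alpha>"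
      proof (cases "\<Gamma> (x (t+1) \<alpha>) j < v")
        case True
        then have "\<alpha> \<in> P t j v" unfolding P_def v_def using \<alpha> o1 o2 by auto
        then show ?thesis by (simp add: indicator_def)
      next
        case False
        then have "\<Gamma> (x (t+1) \<alpha>) j > v" using j(2) v_def by auto
        then have "\<alpha> \<in> Q t j v" unfolding Q_def v_def using \<alpha> o1 o2 by auto
        then show ?thesis by (simp add: indicator_def)
      qed
      have "indicator (P t j v) \<alpha> + indicator (Q t j v) \<alpha> \<le>
          (\<Sum>v\<in>V j. indicator (P t j v) \<alpha> + indicator (Q t j v) \<alpha> :: real)"
        using vV unfolding V_def by (intro member_le_sum) auto
      also have "\<dots> \<le> (\<Sum>j<N. \<Sum>v\<in>V j. indicator (P t j v) \<alpha> + indicator (Q t j v) \<alpha> :: real)"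
        using j(1) by (intro member_le_sum sum_nonneg) (auto simp: V_def)
      finally show ?thesis using one f_range[of "x (t+1) \<alpha>" "y t"] f_range[of "x t \<alpha>" "y t"] by linarith
    qed
    show ?thesis unfolding F_def G_def by (rule sum_mono) (rule step)
  qed
  have int_ind: "integrable M (indicator A :: _ \<Rightarrow> real)" if "A \<in> sets M" for A
    using that by (intro integrable_real_indicator) (simp_all add: less_top[symmetric])
  have ipq: "integrable M (\<lambda>\<alpha>. indicator (P t j v) \<alpha> + indicator (Q t j v) \<alpha> :: real)" for t j v
    by (rule Bochner_Integration.integrable_add[OF int_ind[OF P_sets] int_ind[OF Q_sets]])
  have ipq_int: "integral\<^sup>L M (\<lambda>\<alpha>. indicator (P t j v) \<alpha> + indicator (Q t j v) \<alpha> :: real)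
      = measure M (P t j v) + measure M (Q t j v)" for t j v
    using Bochner_Integration.integral_add[OF int_ind[OF P_sets] int_ind[OF Q_sets], of t j v t j v]
    by (simp add: integral_indicator sets.Int_space_eq2[OF P_sets] sets.Int_space_eq2[OF Q_sets])
  have G_int: "integrable M G" unfolding G_def
    by (intro Bochner_Integration.integrable_sum ipq)
  have "integral\<^sup>L M G = (\<Sum>t\<in>{1..T}. integral\<^sup>L M (\<lambda>\<alpha>. \<Sum>j<N. \<Sum>v\<in>V j.
      indicator (P t j v) \<alpha> + indicator (Q t j v) \<alpha> :: real))"
    unfolding G_def by (rule Bochner_Integration.integral_sum) (intro Bochner_Integration.integrable_sum ipq)
  also have "\<dots> = (\<Sum>t\<in>{1..T}. \<Sum>j<N. integral\<^sup>L M (\<lambda>\<alpha>. \<Sum>v\<in>V j.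
      indicator (P t j v) \<alpha> + indicator (Q t j v) \<alpha> :: real))"
    by (intro sum.cong refl Bochner_Integration.integral_sum Bochner_Integration.integrable_sum ipq)
  also have "\<dots> = (\<Sum>t\<in>{1..T}. \<Sum>j<N. \<Sum>v\<in>V j. integral\<^sup>L M (\<lambda>\<alpha>.
      indicator (P t j v) \<alpha> + indicator (Q t j v) \<alpha> :: real))"
    by (intro sum.cong refl Bochner_Integration.integral_sum ipq)
  also have "\<dots> = (\<Sum>t\<in>{1..T}. \<Sum>j<N. \<Sum>v\<in>V j. measure M (P t j v) + measure M (Q t j v))"
    by (simp only: ipq_int)
  also have "\<dots> \<le> (\<Sum>t\<in>{1..T}. \<Sum>j<N. \<Sum>v\<in>V j. 2 * \<rho>)"
  proof (intro sum_mono)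
    fix t j v assume t: "t \<in> {1..T}" and j: "j \<in> {..<N}"
    then have "1 \<le> t" "j < N" by auto
    then show "measure M (P t j v) + measure M (Q t j v) \<le> 2 * \<rho>"
      using P_bound[of t j v] Q_bound[of t j v] by linarith
  qed
  also have "\<dots> \<le> (\<Sum>t\<in>{1..T}. \<Sum>j<N. real \<kappa> * (2 * \<rho>))"
  proof (intro sum_mono)
    fix t j assume j: "j \<in> {..<N}"
    have c: "real (card (V j)) \<le> real \<kappa>" using cardV[of j] j by simp
    have "(\<Sum>v\<in>V j. 2 * \<rho>) = real (card (V j)) * (2 * \<rho>)" by simp
    also have "\<dots> \<le> real \<kappa> * (2 * \<rho>)" using c rho by (intro mult_right_mono) auto
    finally show "(\<Sum>v\<in>V j. 2 * \<rho>) \<le> real \<kappa> * (2 * \<rho>)" .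
  qed
  also have "\<dots> = 2 * real T * real N * real \<kappa> * \<rho>" by (simp add: algebra_simps)
  finally have Gb: "integral\<^sup>L M G \<le> 2 * real T * real N * real \<kappa> * \<rho>" .
  show ?thesis
  proof (cases "integrable M F")
    case True
    have "integral\<^sup>L M F \<le> integral\<^sup>L M G" by (rule integral_mono[OF True G_int pw])
    then show ?thesis using Gb unfolding M_def F_def by simp
  next
    case False
    then show ?thesis using rho unfolding M_def F_def by (simp add: not_integrable_integral_eq)
  qed
qed

end
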